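(* Let $\mathcal{M}\subset\mathbb{R}^n$ be a locally symmetric $C^2$ submanifold, $\sigma\in\Sigma^n$ and $\bar x\in\mathcal{M}\cap\Delta(\sigma)$. Then $\mathrm{Proj}_{\Delta(\sigma)^{\perp\perp}}(T_{\mathcal{M}}(\bar x))=T_{\mathcal{M}}(\bar x)\cap\Delta(\sigma)^{\perp\perp}$, and consequently $$T_{\mathcal{M}}(\bar x)=(T_{\mathcal{M}}(\bar x)\cap\Delta(\sigma)^{\perp\perp})\oplus(T_{\mathcal{M}}(\bar x)\cap\Delta(\sigma)^{\perp}),\qquad N_{\mathcal{M}}(\bar x)=(N_{\mathcal{M}}(\bar x)\cap\Delta(\sigma)^{\perp\perp})\oplus(N_{\mathcal{M}}(\bar x)\cap\Delta(\sigma)^{\perp}).$$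
   Context: $\Sigma^n$ permutations of $\mathbb{N}_n$ acting by $(\sigma x)_i=x_{\sigma^{-1}(i)}$; $P(\sigma)$ partition into orbits of $\sigma$; $P(x)$ partition by equal coordinates; $\Delta(\sigma)=\{x:P(x)=P(\sigma)\}$; $\Delta(\sigma)^{\perp\perp}=\{x:x_i=x_j$ whenever $i,j$ lie in the same set of $P(\sigma)\}$ and $\Delta(\sigma)^{\perp}=\{x:\sum_{j\in I}x_j=0$ for every $I\in P(\sigma)\}$ (its orthogonal complement). $\mathbb{R}^n_\ge=\{x:x_1\ge\cdots\ge x_n\}$; $B$ open ball. A set $S$ is locally symmetric if $S\cap\mathbb{R}^n_\ge\ne\emptyset$ and each $x\in S$ has $\delta>0$ with $\sigma(S\cap B(x,\delta))=S\cap B(x,\delta)$ for all $y\in S\cap B(x,\delta)$, all $\sigma$ with $\sigma y=y$; a locally symmetric $C^2$ submanifold is a connected $C^2$ submanifold without boundary that is locally symmetric. $T_{\mathcal{M}}(\bar x)$, $N_{\mathcal{M}}(\bar x)$ are the tangent and normal spaces. *)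

theory Defs
  imports "HOL-Analysis.Analysis"
begin

text \<open>Vectors of R^n are modelled as real^'n, where the finite index type 'n carries a
linear order identifying it with {1,...,n}.\<close>

definition perm_act :: "('n::finite \<Rightarrow> 'n) \<Rightarrow> real^'n \<Rightarrow> real^'n" where
  "perm_act \<sigma> x = (\<chi> i. x $ (inv \<sigma> i))"

definition same_orbit :: "('n \<Rightarrow> 'n) \<Rightarrow> 'n \<Rightarrow> 'n \<Rightarrow> bool" where
  "same_orbit \<sigma> i j \<longleftrightarrow> (\<exists>k. (\<sigma> ^^ k) i = j)"

text \<open>Delta(sigma): P(x) = P(sigma), i.e. x_i = x_j iff i,j lie in the same orbit.\<close>
definition Delta :: "('n::finite \<Rightarrow> 'n) \<Rightarrow> (real^'n) set" where
  "Delta \<sigma> = {x. \<forall>i j. x $ i = x $ j \<longleftrightarrow> same_orbit \<sigma> i j}"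

definition Delta_perpperp :: "('n::finite \<Rightarrow> 'n) \<Rightarrow> (real^'n) set" where
  "Delta_perpperp \<sigma> = {x. \<forall>i j. same_orbit \<sigma> i j \<longrightarrow> x $ i = x $ j}"

definition Delta_perp :: "('n::finite \<Rightarrow> 'n) \<Rightarrow> (real^'n) set" where
  "Delta_perp \<sigma> = {x. \<forall>i. (\<Sum>j\<in>{j. same_orbit \<sigma> i j}. x $ j) = 0}"

definition nonincreasing_cone :: "(real^'n::{finite,linorder}) set" where
  "nonincreasing_cone = {x. \<forall>i j. i \<le> j \<longrightarrow> x $ j \<le> x $ i}"

definition locally_symmetric :: "(real^'n::{finite,linorder}) set \<Rightarrow> bool" where
  "locally_symmetric S \<longleftrightarrow> S \<inter> nonincreasing_cone \<noteq> {} \<and>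
     (\<forall>x\<in>S. \<exists>\<delta>>0. \<forall>y\<in>S \<inter> ball x \<delta>. \<forall>\<sigma>. \<sigma> permutes UNIV \<and> perm_act \<sigma> y = y \<longrightarrow>
        perm_act \<sigma> ` (S \<inter> ball x \<delta>) = S \<inter> ball x \<delta>)"

definition C2_on :: "('a::euclidean_space \<Rightarrow> 'b::euclidean_space) \<Rightarrow> 'a set \<Rightarrow> bool" where
  "C2_on f U \<longleftrightarrow> (\<exists>f' f''.
     (\<forall>x\<in>U. (f has_derivative blinfun_apply (f' x)) (at x)) \<and>
     (\<forall>x\<in>U. (f' has_derivative blinfun_apply (f'' x)) (at x)) \<and>
     continuous_on U f'')"

definition C2_submanifold :: "(real^'n::finite) set \<Rightarrow> bool" where
  "C2_submanifold M \<longleftrightarrow> (\<forall>x\<in>M. \<exists>U V (\<phi>::real^'n \<Rightarrow> real^'n) \<psi> L. open U \<and> open V \<and> x \<in> U \<and> subspace L \<and>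
      \<phi> ` U = V \<and> \<psi> ` V = U \<and> (\<forall>y\<in>U. \<psi> (\<phi> y) = y) \<and> (\<forall>z\<in>V. \<phi> (\<psi> z) = z) \<and>
      C2_on \<phi> U \<and> C2_on \<psi> V \<and> \<phi> ` (M \<inter> U) = V \<inter> L)"

definition locally_symmetric_C2_submanifold :: "(real^'n::{finite,linorder}) set \<Rightarrow> bool" where
  "locally_symmetric_C2_submanifold M \<longleftrightarrow> connected M \<and> C2_submanifold M \<and> locally_symmetric M"

definition tangent_space :: "(real^'n::finite) set \<Rightarrow> real^'n \<Rightarrow> (real^'n) set" where
  "tangent_space M x = {v. \<exists>\<gamma> e. e > 0 \<and> \<gamma> C1_differentiable_on {-e<..<e} \<and>
      \<gamma> ` {-e<..<e} \<subseteq> M \<and> \<gamma> 0 = x \<and> vector_derivative \<gamma> (at 0) = v}"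

definition mfd_normal_space :: "(real^'n::finite) set \<Rightarrow> real^'n \<Rightarrow> (real^'n) set" where
  "mfd_normal_space M x = {w. \<forall>v\<in>tangent_space M x. inner w v = 0}"

definition proj_onto :: "('a::real_inner) set \<Rightarrow> 'a \<Rightarrow> 'a" where
  "proj_onto S x = (THE p. p \<in> S \<and> (\<forall>s\<in>S. inner (x - p) s = 0))"

definition is_direct_sum :: "('a::real_vector) set \<Rightarrow> 'a set \<Rightarrow> 'a set \<Rightarrow> bool" where
  "is_direct_sum T A B \<longleftrightarrow> T = {a + b | a b. a \<in> A \<and> b \<in> B} \<and> A \<inter> B = {0}"

end

theory Submission
  imports Defs "HOL-Combinatorics.Cycles"
begin

lemma so_refl: "same_orbit \<sigma> i i"
  unfolding same_orbit_def by (rule exI[of _ 0]) simp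

lemma so_trans: "same_orbit \<sigma> i j \<Longrightarrow> same_orbit \<sigma> j k \<Longrightarrow> same_orbit \<sigma> i k"
  unfolding same_orbit_def by (metis funpow_add comp_apply)

lemma so_sym:
  assumes "\<sigma> permutes (UNIV::'n::finite set)" "same_orbit \<sigma> i j"
  shows "same_orbit \<sigma> j i"
proof -
  have "permutation \<sigma>" using assms(1) by (simp add: permutation_permutes) (metis finite)
  then obtain n where n: "(\<sigma> ^^ n) = id" "n > 0" by (rule permutation_is_nilpotent)
  from assms(2) obtain k where k: "(\<sigma> ^^ k) i = j" unfolding same_orbit_def by blast
  have nk: "\<sigma> ^^ (n * k) = id" using n by (metis funpow_mult id_funpow)
  have "k \<le> n * k" using n by simp
  then have "(\<sigma> ^^ (n*k - k)) j = (\<sigma> ^^ (n*k)) i"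
    using k by (metis funpow_add comp_apply le_add_diff_inverse2)
  then show ?thesis unfolding same_orbit_def using nk by auto
qed

lemma fix_iff:
  assumes "\<sigma> permutes (UNIV::'n::finite set)"
  shows "x \<in> Delta_perpperp \<sigma> \<longleftrightarrow> perm_act \<sigma> x = x"
proof
  assume "x \<in> Delta_perpperp \<sigma>"
  moreover have "same_orbit \<sigma> (inv \<sigma> i) i" for i
    unfolding same_orbit_def using assms
    by (intro exI[of _ 1]) (simp add: permutes_inverses)
  ultimately show "perm_act \<sigma> x = x"
    unfolding Delta_perpperp_def perm_act_def by (simp add: vec_eq_iff)
next
  assume "perm_act \<sigma> x = x"
  then have h: "x $ (inv \<sigma> i) = x $ i" for i
    unfolding perm_act_def by (metis vec_lambda_beta)
  have h2: "x $ (\<sigma> j) = x $ j" for j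
    using h[of "\<sigma> j"] assms by (simp add: permutes_inverses)
  have "x $ ((\<sigma> ^^ k) i) = x $ i" for k i
    by (induction k) (simp_all add: h2)
  then show "x \<in> Delta_perpperp \<sigma>"
    unfolding Delta_perpperp_def same_orbit_def by auto
qed

lemma perm_act_linear: "linear (perm_act \<sigma>)"
  by (rule linearI) (simp_all add: perm_act_def vec_eq_iff)

lemma perm_act_inner:
  assumes "\<sigma> permutes (UNIV::'n::finite set)"
  shows "inner (perm_act \<sigma> x) y = inner x (perm_act (inv \<sigma>) y)"
proof -
  have ii: "inv (inv \<sigma>) = \<sigma>" using assms by (simp add: inv_inv_eq permutes_bij)
  have "inner (perm_act \<sigma> x) y = (\<Sum>i\<in>UNIV. x $ (inv \<sigma> i) * y $ i)"
    by (simp add: perm_act_def inner_vec_def)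
  also have "\<dots> = (\<Sum>j\<in>UNIV. x $ (inv \<sigma> (\<sigma> j)) * y $ (\<sigma> j))"
    using assms by (subst sum.reindex[symmetric, unfolded comp_def])
      (simp_all add: permutes_inj permutes_image)
  also have "\<dots> = inner x (perm_act (inv \<sigma>) y)"
    using assms by (simp add: perm_act_def inner_vec_def ii permutes_inverses)
  finally show ?thesis .
qed

lemma subspace_Dpp: "subspace (Delta_perpperp \<sigma>)"
  unfolding subspace_def Delta_perpperp_def by simp

lemma proj_char:
  fixes D :: "'a::euclidean_space set"
  assumes "subspace D"
  shows "proj_onto D v \<in> D \<and> (\<forall>s\<in>D. inner (v - proj_onto D v) s = 0)"
proof -
  obtain y z where yz: "y \<in> span D" "\<And>w. w \<in> span D \<Longrightarrow> orthogonal z w" "v = y + z"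
    using orthogonal_subspace_decomp_exists[of D v] by metis
  have sD: "span D = D" using assms by (simp add: span_eq_iff)
  have P: "y \<in> D \<and> (\<forall>s\<in>D. inner (v - y) s = 0)"
    using yz sD by (auto simp: orthogonal_def)
  have "\<exists>!p. p \<in> D \<and> (\<forall>s\<in>D. inner (v - p) s = 0)"
  proof (rule ex1I[of _ y])
    show "y \<in> D \<and> (\<forall>s\<in>D. inner (v - y) s = 0)" by (rule P)
  next
    fix p assume p: "p \<in> D \<and> (\<forall>s\<in>D. inner (v - p) s = 0)"
    have d: "y - p \<in> D" using p P assms by (simp add: subspace_diff)
    have "inner (v - p) (y - p) - inner (v - y) (y - p) = 0" using p P d by simp
    then have "inner (y - p) (y - p) = 0" by (simp add: inner_diff_left)
    then show "p = y" by simp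
  qed
  then show ?thesis unfolding proj_onto_def by (rule theI')
qed

lemma proj_unique:
  fixes D :: "'a::euclidean_space set"
  assumes "subspace D" "p \<in> D" "\<forall>s\<in>D. inner (v - p) s = 0"
  shows "proj_onto D v = p"
proof -
  let ?q = "proj_onto D v"
  have q: "?q \<in> D" "\<forall>s\<in>D. inner (v - ?q) s = 0" using proj_char[OF assms(1)] by auto
  have d: "?q - p \<in> D" using q assms by (simp add: subspace_diff)
  have "inner (v - p) (?q - p) - inner (v - ?q) (?q - p) = 0" using q assms d by simp
  then have "inner (?q - p) (?q - p) = 0" by (simp add: inner_diff_left)
  then show ?thesis by simp
qed


lemma key:
  assumes sp: "\<sigma> permutes (UNIV::'n::finite set)" and S: "subspace S"
    and inv1: "\<And>v. v \<in> S \<Longrightarrow> perm_act \<sigma> v \<in> S"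
    and inv2: "\<And>v. v \<in> S \<Longrightarrow> perm_act (inv \<sigma>) v \<in> S"
    and v: "v \<in> S"
  shows "proj_onto (Delta_perpperp \<sigma>) v \<in> S"
proof -
  let ?p = "proj_onto (Delta_perpperp \<sigma>) v"
  let ?A = "perm_act \<sigma>"
  have pc: "?p \<in> Delta_perpperp \<sigma>" "\<forall>s\<in>Delta_perpperp \<sigma>. inner (v - ?p) s = 0"
    using proj_char[OF subspace_Dpp] by auto
  obtain a b where ab: "a \<in> span S" "\<And>w. w \<in> span S \<Longrightarrow> orthogonal b w" "?p = a + b"
    using orthogonal_subspace_decomp_exists[of S ?p] by metis
  have sS: "span S = S" using S by (simp add: span_eq_iff)
  have a: "a \<in> S" using ab sS by simp
  have b: "\<And>w. w \<in> S \<Longrightarrow> inner b w = 0" using ab sS by (simp add: orthogonal_def)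
  have Ab: "\<And>w. w \<in> S \<Longrightarrow> inner (?A b) w = 0"
    using perm_act_inner[OF sp] b inv2 by simp
  have lin: "linear ?A" by (rule perm_act_linear)
  have "?A ?p = ?p" using fix_iff[OF sp] pc by simp
  then have "?A a + ?A b = a + b" using ab lin by (simp add: linear_add)
  then have eq: "?A a - a = b - ?A b" by (simp add: algebra_simps)
  have "?A a - a \<in> S" using a inv1 S by (simp add: subspace_diff)
  then have "inner (b - ?A b) (b - ?A b) = 0"
    using eq b Ab by (metis inner_diff_left diff_zero)
  then have "?A b = b" by simp
  then have bD: "b \<in> Delta_perpperp \<sigma>" using fix_iff[OF sp] by simp
  have "inner (v - ?p) b = 0" using pc bD by simp
  moreover have "inner v b = 0" using b[OF v] by (simp add: inner_commute)
  moreover have "inner a b = 0" using b[OF a] by (simp add: inner_commute)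
  ultimately have "inner b b = 0" using ab(3) by (simp add: inner_diff_left inner_add_left)
  then have "b = 0" by simp
  then show ?thesis using ab(3) a by simp
qed

lemma indicator_in_Dpp:
  assumes sp: "\<sigma> permutes (UNIV::'n::finite set)"
  shows "((\<chi> j. if same_orbit \<sigma> i j then 1 else 0) :: real^'n) \<in> Delta_perpperp \<sigma>"
proof -
  have "same_orbit \<sigma> i j \<longleftrightarrow> same_orbit \<sigma> i k" if "same_orbit \<sigma> j k" for j k
    using so_trans[of \<sigma> i j k] so_trans[of \<sigma> i k j] so_sym[OF sp that] that by blast
  then show ?thesis unfolding Delta_perpperp_def by simp
qed

lemma diff_in_Dp:
  assumes sp: "\<sigma> permutes (UNIV::'n::finite set)"
  shows "v - proj_onto (Delta_perpperp \<sigma>) v \<in> Delta_perp \<sigma>"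
proof -
  let ?u = "v - proj_onto (Delta_perpperp \<sigma>) v"
  have pc: "\<forall>s\<in>Delta_perpperp \<sigma>. inner ?u s = 0"
    using proj_char[OF subspace_Dpp] by auto
  have "(\<Sum>j\<in>{j. same_orbit \<sigma> i j}. ?u $ j) = 0" for i
  proof -
    have "(\<Sum>j\<in>{j. same_orbit \<sigma> i j}. ?u $ j)
        = (\<Sum>j\<in>UNIV. ?u $ j * (if same_orbit \<sigma> i j then 1 else 0))"
      using sum.inter_filter[of UNIV "\<lambda>j. ?u $ j" "same_orbit \<sigma> i"]
      by (simp add: if_distrib cong: if_cong)
    also have "\<dots> = inner ?u ((\<chi> j. if same_orbit \<sigma> i j then 1 else 0) :: real^'n)"
      by (simp add: inner_vec_def)
    also have "\<dots> = 0" using pc indicator_in_Dpp[OF sp] by blast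
    finally show ?thesis .
  qed
  then show ?thesis unfolding Delta_perp_def by simp
qed

lemma Dpp_Dp_zero:
  assumes "x \<in> Delta_perpperp \<sigma>" "x \<in> Delta_perp \<sigma>"
  shows "x = (0::real^'n::finite)"
proof -
  have "x $ i = 0" for i
  proof -
    have "(\<Sum>j\<in>{j. same_orbit \<sigma> i j}. x $ j) = 0" using assms(2) unfolding Delta_perp_def by simp
    moreover have "(\<Sum>j\<in>{j. same_orbit \<sigma> i j}. x $ j) = (\<Sum>j\<in>{j. same_orbit \<sigma> i j}. x $ i)"
      using assms(1) unfolding Delta_perpperp_def by (intro sum.cong) auto
    moreover have "(\<Sum>j\<in>{j. same_orbit \<sigma> i j}. x $ i) = real (card {j. same_orbit \<sigma> i j}) * x $ i"
      by (rule sum_constant)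
    moreover have "{j. same_orbit \<sigma> i j} \<noteq> {}" using so_refl[of \<sigma> i] by blast
    then have "card {j. same_orbit \<sigma> i j} \<noteq> 0" by (simp add: card_eq_0_iff)
    ultimately show ?thesis by (metis mult_eq_0_iff of_nat_eq_0_iff)
  qed
  then show ?thesis by (simp add: vec_eq_iff)
qed

lemma abstract_result:
  assumes sp: "\<sigma> permutes (UNIV::'n::finite set)" and S: "subspace S"
    and inv1: "\<And>v. v \<in> S \<Longrightarrow> perm_act \<sigma> v \<in> S"
    and inv2: "\<And>v. v \<in> S \<Longrightarrow> perm_act (inv \<sigma>) v \<in> S"
  shows "proj_onto (Delta_perpperp \<sigma>) ` S = S \<inter> Delta_perpperp \<sigma>"
    and "is_direct_sum S (S \<inter> Delta_perpperp \<sigma>) (S \<inter> Delta_perp \<sigma>)"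
proof -
  have P: "proj_onto (Delta_perpperp \<sigma>) v \<in> S \<inter> Delta_perpperp \<sigma>" if "v \<in> S" for v
    using key[OF sp S inv1 inv2 that] proj_char[OF subspace_Dpp] by auto
  show "proj_onto (Delta_perpperp \<sigma>) ` S = S \<inter> Delta_perpperp \<sigma>"
  proof
    show "proj_onto (Delta_perpperp \<sigma>) ` S \<subseteq> S \<inter> Delta_perpperp \<sigma>" using P by auto
    show "S \<inter> Delta_perpperp \<sigma> \<subseteq> proj_onto (Delta_perpperp \<sigma>) ` S"
    proof
      fix v assume v: "v \<in> S \<inter> Delta_perpperp \<sigma>"
      then have "proj_onto (Delta_perpperp \<sigma>) v = v"
        by (intro proj_unique[OF subspace_Dpp]) auto
      then show "v \<in> proj_onto (Delta_perpperp \<sigma>) ` S" using v by (metis IntD1 image_eqI)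
    qed
  qed
  have "S = {a + b |a b. a \<in> S \<inter> Delta_perpperp \<sigma> \<and> b \<in> S \<inter> Delta_perp \<sigma>}"
  proof
    show "S \<subseteq> {a + b |a b. a \<in> S \<inter> Delta_perpperp \<sigma> \<and> b \<in> S \<inter> Delta_perp \<sigma>}"
    proof
      fix v assume v: "v \<in> S"
      let ?p = "proj_onto (Delta_perpperp \<sigma>) v"
      have "?p \<in> S \<inter> Delta_perpperp \<sigma>" using P v by blast
      moreover have "v - ?p \<in> S \<inter> Delta_perp \<sigma>"
        using diff_in_Dp[OF sp] P v S by (simp add: subspace_diff)
      moreover have "v = ?p + (v - ?p)" by simp
      ultimately show "v \<in> {a + b |a b. a \<in> S \<inter> Delta_perpperp \<sigma> \<and> b \<in> S \<inter> Delta_perp \<sigma>}"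
        by blast
    qed
    show "{a + b |a b. a \<in> S \<inter> Delta_perpperp \<sigma> \<and> b \<in> S \<inter> Delta_perp \<sigma>} \<subseteq> S"
      using S by (auto simp: subspace_add)
  qed
  moreover have "S \<inter> Delta_perpperp \<sigma> \<inter> (S \<inter> Delta_perp \<sigma>) = {0}"
  proof -
    have z: "(0::real^'n) \<in> Delta_perpperp \<sigma>" "(0::real^'n) \<in> Delta_perp \<sigma>"
      by (simp_all add: Delta_perpperp_def Delta_perp_def)
    show ?thesis using Dpp_Dp_zero[of _ \<sigma>] z subspace_0[OF S] by blast
  qed
  ultimately show "is_direct_sum S (S \<inter> Delta_perpperp \<sigma>) (S \<inter> Delta_perp \<sigma>)"
    unfolding is_direct_sum_def by blast
qed


lemma deriv_in_subspace:
  fixes c :: "real \<Rightarrow> 'a::euclidean_space"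
  assumes d: "(c has_vector_derivative w) (at 0)" and L: "subspace L"
    and W: "open W" "0 \<in> W" and cL: "\<And>t. t \<in> W \<Longrightarrow> c t \<in> L"
  shows "w \<in> L"
proof -
  have orth: "inner u w = 0" if u: "\<And>l. l \<in> L \<Longrightarrow> inner u l = 0" for u
  proof -
    have "((\<lambda>t. inner u (c t)) has_derivative (\<lambda>t. inner u (t *\<^sub>R w))) (at 0)"
      using bounded_linear.has_derivative[OF bounded_linear_inner_right d[unfolded has_vector_derivative_def]] .
    moreover have "((\<lambda>t. inner u (c t)) has_derivative (\<lambda>t. 0)) (at 0)"
      by (rule has_derivative_transform_within_open[OF has_derivative_const W]) (simp add: u cL)
    ultimately have "(\<lambda>t. inner u (t *\<^sub>R w)) = (\<lambda>t. 0)" by (rule has_derivative_unique)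
    then show ?thesis by (metis scaleR_one)
  qed
  obtain y z where yz: "y \<in> span L" "\<And>l. l \<in> span L \<Longrightarrow> orthogonal z l" "w = y + z"
    using orthogonal_subspace_decomp_exists[of L w] by metis
  have sL: "span L = L" using L by (simp add: span_eq_iff)
  have "inner z w = 0" using orth[of z] yz sL by (simp add: orthogonal_def)
  moreover have "inner z y = 0" using yz sL by (simp add: orthogonal_def)
  ultimately have "inner z z = 0" using yz(3) by (simp add: inner_add_right)
  then show ?thesis using yz sL by simp
qed

lemma tangent_subspace:
  fixes M :: "(real^'n::finite) set"
  assumes "C2_submanifold M" "x \<in> M"
  shows "subspace (tangent_space M x)"
proof -
  have "\<exists>U V (\<phi>::real^'n \<Rightarrow> real^'n) \<psi> L. open U \<and> open V \<and> x \<in> U \<and> subspace L \<and>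
      \<phi> ` U = V \<and> \<psi> ` V = U \<and> (\<forall>y\<in>U. \<psi> (\<phi> y) = y) \<and> (\<forall>z\<in>V. \<phi> (\<psi> z) = z) \<and>
      C2_on \<phi> U \<and> C2_on \<psi> V \<and> \<phi> ` (M \<inter> U) = V \<inter> L"
    using assms(1)[unfolded C2_submanifold_def] assms(2) by (rule bspec)
  then obtain U where "\<exists>V (\<phi>::real^'n \<Rightarrow> real^'n) \<psi> L. open U \<and> open V \<and> x \<in> U \<and> subspace L \<and>
      \<phi> ` U = V \<and> \<psi> ` V = U \<and> (\<forall>y\<in>U. \<psi> (\<phi> y) = y) \<and> (\<forall>z\<in>V. \<phi> (\<psi> z) = z) \<and>
      C2_on \<phi> U \<and> C2_on \<psi> V \<and> \<phi> ` (M \<inter> U) = V \<inter> L" ..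
  then obtain V where "\<exists>(\<phi>::real^'n \<Rightarrow> real^'n) \<psi> L. open U \<and> open V \<and> x \<in> U \<and> subspace L \<and>
      \<phi> ` U = V \<and> \<psi> ` V = U \<and> (\<forall>y\<in>U. \<psi> (\<phi> y) = y) \<and> (\<forall>z\<in>V. \<phi> (\<psi> z) = z) \<and>
      C2_on \<phi> U \<and> C2_on \<psi> V \<and> \<phi> ` (M \<inter> U) = V \<inter> L" ..
  then obtain \<phi> :: "real^'n \<Rightarrow> real^'n" where "\<exists>\<psi> L. open U \<and> open V \<and> x \<in> U \<and> subspace L \<and>
      \<phi> ` U = V \<and> \<psi> ` V = U \<and> (\<forall>y\<in>U. \<psi> (\<phi> y) = y) \<and> (\<forall>z\<in>V. \<phi> (\<psi> z) = z) \<and>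
      C2_on \<phi> U \<and> C2_on \<psi> V \<and> \<phi> ` (M \<inter> U) = V \<inter> L" ..
  then obtain \<psi> where "\<exists>L. open U \<and> open V \<and> x \<in> U \<and> subspace L \<and>
      \<phi> ` U = V \<and> \<psi> ` V = U \<and> (\<forall>y\<in>U. \<psi> (\<phi> y) = y) \<and> (\<forall>z\<in>V. \<phi> (\<psi> z) = z) \<and>
      C2_on \<phi> U \<and> C2_on \<psi> V \<and> \<phi> ` (M \<inter> U) = V \<inter> L" ..
  then obtain L where chc: "open U \<and> open V \<and> x \<in> U \<and> subspace L \<and>
      \<phi> ` U = V \<and> \<psi> ` V = U \<and> (\<forall>y\<in>U. \<psi> (\<phi> y) = y) \<and> (\<forall>z\<in>V. \<phi> (\<psi> z) = z) \<and>
      C2_on \<phi> U \<and> C2_on \<psi> V \<and> \<phi> ` (M \<inter> U) = V \<inter> L" ..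
  have ch: "open U" "open V" "x \<in> U" "subspace L"
      "\<phi> ` U = V" "\<psi> ` V = U" "\<forall>y\<in>U. \<psi> (\<phi> y) = y" "\<forall>z\<in>V. \<phi> (\<psi> z) = z"
      "C2_on \<phi> U" "C2_on \<psi> V" "\<phi> ` (M \<inter> U) = V \<inter> L"
    using chc by (simp_all only:) blast+
  have "\<exists>\<phi>' \<phi>''. (\<forall>x\<in>U. (\<phi> has_derivative blinfun_apply (\<phi>' x)) (at x)) \<and>
     (\<forall>x\<in>U. (\<phi>' has_derivative blinfun_apply (\<phi>'' x)) (at x)) \<and> continuous_on U \<phi>''"
    using ch(9) unfolding C2_on_def .
  then obtain \<phi>' where h\<phi>: "\<forall>y\<in>U. (\<phi> has_derivative blinfun_apply (\<phi>' y)) (at y)"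
    by (elim exE) blast
  have "\<exists>\<psi>' \<psi>''. (\<forall>x\<in>V. (\<psi> has_derivative blinfun_apply (\<psi>' x)) (at x)) \<and>
     (\<forall>x\<in>V. (\<psi>' has_derivative blinfun_apply (\<psi>'' x)) (at x)) \<and> continuous_on V \<psi>''"
    using ch(10) unfolding C2_on_def .
  then obtain \<psi>' \<psi>'' where h\<psi>: "\<forall>z\<in>V. (\<psi> has_derivative blinfun_apply (\<psi>' z)) (at z)"
      "\<forall>z\<in>V. (\<psi>' has_derivative blinfun_apply (\<psi>'' z)) (at z)"
    by (elim exE) blast
  define p where "p = \<phi> x"
  have pV: "p \<in> V" and pL: "p \<in> L" using ch(3,11) assms(2) unfolding p_def by blast+
  have \<psi>p: "\<psi> p = x" using ch(3,7) p_def by simp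
  have inv_d: "blinfun_apply (\<psi>' p) (blinfun_apply (\<phi>' x) h) = h" for h
  proof -
    have "(\<psi> has_derivative blinfun_apply (\<psi>' p)) (at (\<phi> x))" using h\<psi>(1) pV p_def by simp
    then have "((\<psi> \<circ> \<phi>) has_derivative (blinfun_apply (\<psi>' p) \<circ> blinfun_apply (\<phi>' x))) (at x)"
      by (rule diff_chain_at[OF h\<phi>[rule_format, OF ch(3)]])
    moreover have "((\<psi> \<circ> \<phi>) has_derivative (\<lambda>y. y)) (at x)"
      by (rule has_derivative_transform_within_open[OF has_derivative_ident ch(1) ch(3)])
        (simp add: ch(7))
    ultimately have "(blinfun_apply (\<psi>' p) \<circ> blinfun_apply (\<phi>' x)) = (\<lambda>y. y)"
      by (rule has_derivative_unique)
    then show ?thesis by (metis comp_apply)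
  qed
  have "tangent_space M x = blinfun_apply (\<psi>' p) ` L"
  proof
    show "tangent_space M x \<subseteq> blinfun_apply (\<psi>' p) ` L"
    proof
      fix v assume "v \<in> tangent_space M x"
      then obtain \<gamma> e where g: "e > 0" "\<gamma> C1_differentiable_on {-e<..<e}"
        "\<gamma> ` {-e<..<e} \<subseteq> M" "\<gamma> 0 = x" "vector_derivative \<gamma> (at 0) = v"
        unfolding tangent_space_def by blast
      have "\<gamma> differentiable at 0" using g(1,2) unfolding C1_differentiable_on_eq by simp
      then have gd: "(\<gamma> has_vector_derivative v) (at 0)"
        using g(5) vector_derivative_works by blast
      have "isCont \<gamma> 0" using has_vector_derivative_continuous[OF gd] .
      then have "\<exists>S. open S \<and> 0 \<in> S \<and> (\<forall>t\<in>S. \<gamma> t \<in> U)"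
        using continuous_at_open[THEN iffD1, rule_format, of 0 \<gamma> U] ch(1,3) g(4) by simp
      then obtain Sx where Sx: "open Sx" "0 \<in> Sx" "\<forall>t\<in>Sx. \<gamma> t \<in> U" by blast
      define W where "W = Sx \<inter> {-e<..<e}"
      have W: "open W" "0 \<in> W" using g(1) Sx by (auto simp: W_def)
      have cL: "\<phi> (\<gamma> t) \<in> L" if "t \<in> W" for t
      proof -
        have "\<gamma> t \<in> M \<inter> U" using that g(3) Sx(3) by (auto simp: W_def)
        then show ?thesis using ch(11) by blast
      qed
      have "(\<phi> has_derivative blinfun_apply (\<phi>' x)) (at (\<gamma> 0))" using h\<phi> ch(3) g(4) by simp
      then have "((\<phi> \<circ> \<gamma>) has_derivative (blinfun_apply (\<phi>' x) \<circ> (\<lambda>h. h *\<^sub>R v))) (at 0)"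
        by (rule diff_chain_at[OF gd[unfolded has_vector_derivative_def]])
      then have cd: "((\<phi> \<circ> \<gamma>) has_vector_derivative blinfun_apply (\<phi>' x) v) (at 0)"
        unfolding has_vector_derivative_def by (simp add: comp_def blinfun.scaleR_right)
      have "blinfun_apply (\<phi>' x) v \<in> L"
        by (rule deriv_in_subspace[OF cd ch(4) W]) (simp add: cL)
      then show "v \<in> blinfun_apply (\<psi>' p) ` L" using inv_d[of v] by (metis image_eqI)
    qed
  next
    show "blinfun_apply (\<psi>' p) ` L \<subseteq> tangent_space M x"
    proof
      fix u assume "u \<in> blinfun_apply (\<psi>' p) ` L"
      then obtain w where w: "w \<in> L" "u = blinfun_apply (\<psi>' p) w" by blast
      obtain r where r: "r > 0" "ball p r \<subseteq> V" using ch(2) pV open_contains_ball by blast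
      define e where "e = r / (norm w + 1)"
      have n1: "norm w + 1 > 0" by (smt (verit) norm_ge_zero)
      have e: "e > 0" using r n1 by (simp add: e_def)
      define \<gamma> where "\<gamma> = (\<lambda>t. \<psi> (p + t *\<^sub>R w))"
      have lineV: "p + t *\<^sub>R w \<in> V" if "t \<in> {-e<..<e}" for t
      proof -
        have "norm (t *\<^sub>R w) \<le> e * norm w" using that by (auto intro!: mult_right_mono)
        also have "\<dots> < r"
        proof -
          have "e * norm w < e * (norm w + 1)" using e by simp
          also have "\<dots> = r" using n1 by (simp add: e_def)
          finally show ?thesis .
        qed
        finally have "dist p (p + t *\<^sub>R w) < r" by (simp add: dist_norm)
        then have "p + t *\<^sub>R w \<in> ball p r" by (simp only: mem_ball)
        then show ?thesis using r(2) by (rule subsetD[rotated])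
      qed
      have lineL: "p + t *\<^sub>R w \<in> L" for t
        using ch(4) pL w(1) by (simp add: subspace_add subspace_scale)
      have inM: "\<gamma> t \<in> M" if "t \<in> {-e<..<e}" for t
      proof -
        have "p + t *\<^sub>R w \<in> V \<inter> L" using lineV[OF that] lineL by (rule IntI)
        then have "p + t *\<^sub>R w \<in> \<phi> ` (M \<inter> U)" by (simp only: ch(11))
        then obtain y where "y \<in> M \<inter> U" "p + t *\<^sub>R w = \<phi> y" by auto
        then show ?thesis using ch(7) by (simp add: \<gamma>_def)
      qed
      have der: "(\<gamma> has_vector_derivative blinfun_apply (\<psi>' (p + t *\<^sub>R w)) w) (at t)"
        if "t \<in> {-e<..<e}" for t
      proof -
        have "((\<lambda>t. p + t *\<^sub>R w) has_vector_derivative w) (at t)"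
          by (auto intro!: derivative_eq_intros)
        moreover have "(\<psi> has_derivative blinfun_apply (\<psi>' (p + t *\<^sub>R w))) (at (p + t *\<^sub>R w))"
          using h\<psi>(1) lineV[OF that] by blast
        ultimately have "((\<psi> \<circ> (\<lambda>t. p + t *\<^sub>R w)) has_derivative
            (blinfun_apply (\<psi>' (p + t *\<^sub>R w)) \<circ> (\<lambda>x. x *\<^sub>R w))) (at t)"
          unfolding has_vector_derivative_def by (rule diff_chain_at)
        then show ?thesis unfolding has_vector_derivative_def \<gamma>_def
          by (simp add: comp_def blinfun.scaleR_right)
      qed
      have cont\<psi>': "continuous_on V \<psi>'"
      proof -
        have "\<forall>z\<in>V. isCont \<psi>' z" using h\<psi>(2) has_derivative_continuous by blast
        then show ?thesis by (rule continuous_at_imp_continuous_on)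
      qed
      have "continuous_on {-e<..<e} (\<lambda>t. \<psi>' (p + t *\<^sub>R w))"
      proof (rule continuous_on_compose2[OF cont\<psi>'])
        show "continuous_on {-e<..<e} (\<lambda>t. p + t *\<^sub>R w)"
          by (intro continuous_on_add continuous_on_const continuous_on_scaleR continuous_on_id)
        show "(\<lambda>t. p + t *\<^sub>R w) ` {-e<..<e} \<subseteq> V" using lineV by blast
      qed
      then have cD: "continuous_on {-e<..<e} (\<lambda>t. blinfun_apply (\<psi>' (p + t *\<^sub>R w)) w)"
        by (rule blinfun.continuous_on[OF _ continuous_on_const])
      have C1: "\<gamma> C1_differentiable_on {-e<..<e}"
        unfolding C1_differentiable_on_def
        by (rule exI[of _ "\<lambda>t. blinfun_apply (\<psi>' (p + t *\<^sub>R w)) w"]) (use der cD in blast)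
      have "vector_derivative \<gamma> (at 0) = u"
        using der[of 0] e w(2) by (simp add: vector_derivative_at)
      moreover have "\<gamma> 0 = x" using \<psi>p by (simp add: \<gamma>_def)
      ultimately show "u \<in> tangent_space M x"
        unfolding tangent_space_def using e C1 inM
        by (intro CollectI exI[of _ \<gamma>] exI[of _ e]) auto
    qed
  qed
  then show ?thesis using linear_subspace_image[OF bounded_linear.linear[OF blinfun.bounded_linear_right] ch(4)] by simp
qed


lemma perm_bl: "bounded_linear (perm_act \<sigma> :: real^'n::finite \<Rightarrow> real^'n)"
  using perm_act_linear linear_conv_bounded_linear by blast

lemma xbar_fixed:
  assumes sp: "\<sigma> permutes (UNIV::'n::finite set)" and xd: "xbar \<in> Delta \<sigma>"
  shows "perm_act \<sigma> xbar = xbar" "perm_act (inv \<sigma>) xbar = xbar"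
proof -
  have xd': "\<And>i j. xbar $ i = xbar $ j \<longleftrightarrow> same_orbit \<sigma> i j" using xd unfolding Delta_def by simp
  have "xbar \<in> Delta_perpperp \<sigma>" unfolding Delta_perpperp_def using xd' by simp
  then show "perm_act \<sigma> xbar = xbar" using fix_iff[OF sp] by blast
  have ii: "inv (inv \<sigma>) = \<sigma>" using sp by (simp add: inv_inv_eq permutes_bij)
  have "same_orbit \<sigma> i (\<sigma> i)" for i unfolding same_orbit_def by (rule exI[of _ 1]) simp
  then have "xbar $ (\<sigma> i) = xbar $ i" for i using xd'[of i "\<sigma> i"] by simp
  then show "perm_act (inv \<sigma>) xbar = xbar"
    unfolding perm_act_def ii by (simp add: vec_eq_iff)
qed

lemma tangent_invariant:
  fixes M :: "(real^'n::{finite,linorder}) set"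
  assumes ls: "locally_symmetric M" and xM: "xbar \<in> M"
    and tp: "\<tau> permutes UNIV" and tx: "perm_act \<tau> xbar = xbar"
    and v: "v \<in> tangent_space M xbar"
  shows "perm_act \<tau> v \<in> tangent_space M xbar"
proof -
  have "\<exists>\<delta>>0. \<forall>y\<in>M \<inter> ball xbar \<delta>. \<forall>\<sigma>. \<sigma> permutes UNIV \<and> perm_act \<sigma> y = y \<longrightarrow>
        perm_act \<sigma> ` (M \<inter> ball xbar \<delta>) = M \<inter> ball xbar \<delta>"
  proof -
    have "\<forall>x\<in>M. \<exists>\<delta>>0. \<forall>y\<in>M \<inter> ball x \<delta>. \<forall>\<sigma>. \<sigma> permutes UNIV \<and> perm_act \<sigma> y = y \<longrightarrow>
        perm_act \<sigma> ` (M \<inter> ball x \<delta>) = M \<inter> ball x \<delta>"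
      using ls unfolding locally_symmetric_def by (rule conjunct2)
    then show ?thesis using xM by (rule bspec)
  qed
  then obtain \<delta> where dd: "\<delta> > 0 \<and> (\<forall>y\<in>M \<inter> ball xbar \<delta>. \<forall>\<sigma>. \<sigma> permutes UNIV \<and> perm_act \<sigma> y = y \<longrightarrow>
        perm_act \<sigma> ` (M \<inter> ball xbar \<delta>) = M \<inter> ball xbar \<delta>)" ..
  note d = conjunct1[OF dd] conjunct2[OF dd]
  have xB: "xbar \<in> M \<inter> ball xbar \<delta>" using xM d(1) by simp
  have inv: "perm_act \<tau> ` (M \<inter> ball xbar \<delta>) = M \<inter> ball xbar \<delta>"
    using d(2)[rule_format, OF xB conjI[OF tp tx]] .
  obtain \<gamma> e where g: "e > 0" "\<gamma> C1_differentiable_on {-e<..<e}"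
      "\<gamma> ` {-e<..<e} \<subseteq> M" "\<gamma> 0 = xbar" "vector_derivative \<gamma> (at 0) = v"
    using v unfolding tangent_space_def by blast
  have "\<gamma> differentiable at 0" using g(1,2) unfolding C1_differentiable_on_eq by simp
  then have gd: "(\<gamma> has_vector_derivative v) (at 0)"
    using g(5) vector_derivative_works by blast
  have "isCont \<gamma> 0" using has_vector_derivative_continuous[OF gd] .
  then have "\<exists>S. open S \<and> 0 \<in> S \<and> (\<forall>t\<in>S. \<gamma> t \<in> ball xbar \<delta>)"
    using continuous_at_open[THEN iffD1, rule_format, of 0 \<gamma> "ball xbar \<delta>"] d(1) g(4) by simp
  then obtain Sx where Sx: "open Sx" "0 \<in> Sx" "\<forall>t\<in>Sx. \<gamma> t \<in> ball xbar \<delta>" by blast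
  have "open (Sx \<inter> {-e<..<e})" "(0::real) \<in> Sx \<inter> {-e<..<e}" using Sx g(1) by auto
  then obtain e' where e': "e' > 0" "ball 0 e' \<subseteq> Sx \<inter> {-e<..<e}"
    using open_contains_ball by blast
  have bb: "ball (0::real) e' = {-e'<..<e'}" by (simp add: ball_eq_greaterThanLessThan)
  define \<gamma>' where "\<gamma>' = (\<lambda>t. perm_act \<tau> (\<gamma> t))"
  have C1: "\<gamma>' C1_differentiable_on {-e'<..<e'}"
  proof -
    have "\<gamma> C1_differentiable_on {-e'<..<e'}"
      using C1_differentiable_on_subset[OF g(2)] e'(2) bb by blast
    then obtain D where D: "\<forall>t\<in>{-e'<..<e'}. (\<gamma> has_vector_derivative D t) (at t)"
        "continuous_on {-e'<..<e'} D"
      unfolding C1_differentiable_on_def by blast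
    have "\<forall>t\<in>{-e'<..<e'}. (\<gamma>' has_vector_derivative perm_act \<tau> (D t)) (at t)"
      using D(1) bounded_linear.has_vector_derivative[OF perm_bl] unfolding \<gamma>'_def by blast
    moreover have "continuous_on {-e'<..<e'} (\<lambda>t. perm_act \<tau> (D t))"
      by (rule linear_continuous_on_compose[OF D(2) perm_act_linear])
    ultimately show ?thesis unfolding C1_differentiable_on_def
      by (intro exI[of _ "\<lambda>t. perm_act \<tau> (D t)"] conjI)
  qed
  have img: "\<gamma>' ` {-e'<..<e'} \<subseteq> M"
  proof
    fix y assume "y \<in> \<gamma>' ` {-e'<..<e'}"
    then obtain t where t: "t \<in> {-e'<..<e'}" "y = \<gamma>' t" by blast
    have "t \<in> Sx" "t \<in> {-e<..<e}" using t(1) e'(2) bb by auto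
    then have "\<gamma> t \<in> M \<inter> ball xbar \<delta>" using Sx(3) g(3) by blast
    then have "y \<in> perm_act \<tau> ` (M \<inter> ball xbar \<delta>)" using t(2) unfolding \<gamma>'_def by blast
    then show "y \<in> M" using inv by blast
  qed
  have "(\<gamma>' has_vector_derivative perm_act \<tau> v) (at 0)"
    unfolding \<gamma>'_def by (rule bounded_linear.has_vector_derivative[OF perm_bl gd])
  then have "vector_derivative \<gamma>' (at 0) = perm_act \<tau> v" by (rule vector_derivative_at)
  moreover have "\<gamma>' 0 = xbar" using g(4) tx by (simp add: \<gamma>'_def)
  ultimately show ?thesis
    unfolding tangent_space_def using e'(1) C1 img
    by (intro CollectI exI[of _ \<gamma>'] exI[of _ e']) auto
qed

lemma normal_subspace: "subspace (mfd_normal_space M x)"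
  unfolding subspace_def mfd_normal_space_def
  by (simp add: inner_add_left)

lemma normal_invariant:
  assumes sp: "\<sigma> permutes (UNIV::'n::finite set)"
    and T1: "\<And>v. v \<in> tangent_space M x \<Longrightarrow> perm_act \<sigma> v \<in> tangent_space M x"
    and T2: "\<And>v. v \<in> tangent_space M x \<Longrightarrow> perm_act (inv \<sigma>) v \<in> tangent_space M x"
    and w: "w \<in> mfd_normal_space M x"
  shows "perm_act \<sigma> w \<in> mfd_normal_space M x" "perm_act (inv \<sigma>) w \<in> mfd_normal_space M x"
proof -
  have ii: "inv (inv \<sigma>) = \<sigma>" using sp by (simp add: inv_inv_eq permutes_bij)
  have wn: "\<And>v. v \<in> tangent_space M x \<Longrightarrow> inner w v = 0" using w unfolding mfd_normal_space_def by blast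
  show "perm_act \<sigma> w \<in> mfd_normal_space M x"
    unfolding mfd_normal_space_def using perm_act_inner[OF sp] wn T2 by simp
  show "perm_act (inv \<sigma>) w \<in> mfd_normal_space M x"
    unfolding mfd_normal_space_def using perm_act_inner[OF permutes_inv[OF sp]] wn T1 ii by simp
qed

theorem proposition3p15:
  fixes M :: "(real, 'n::{finite,linorder}) vec set" and \<sigma> :: "'n \<Rightarrow> 'n" and xbar :: "(real, 'n) vec"
  assumes "locally_symmetric_C2_submanifold M"
    and "\<sigma> permutes UNIV"
    and "xbar \<in> M \<inter> Delta \<sigma>"
  shows "proj_onto (Delta_perpperp \<sigma>) ` tangent_space M xbar
           = tangent_space M xbar \<inter> Delta_perpperp \<sigma>
     \<and> is_direct_sum (tangent_space M xbar)
           (tangent_space M xbar \<inter> Delta_perpperp \<sigma>) (tangent_space M xbar \<inter> Delta_perp \<sigma>)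
     \<and> is_direct_sum (mfd_normal_space M xbar)
           (mfd_normal_space M xbar \<inter> Delta_perpperp \<sigma>) (mfd_normal_space M xbar \<inter> Delta_perp \<sigma>)"
proof -
  have C2: "C2_submanifold M" and ls: "locally_symmetric M"
    using assms(1) unfolding locally_symmetric_C2_submanifold_def by simp_all
  have xM: "xbar \<in> M" and xd: "xbar \<in> Delta \<sigma>" using assms(3) by simp_all
  have sp: "\<sigma> permutes UNIV" by (rule assms(2))
  have T1: "\<And>v. v \<in> tangent_space M xbar \<Longrightarrow> perm_act \<sigma> v \<in> tangent_space M xbar"
    by (rule tangent_invariant[OF ls xM sp xbar_fixed(1)[OF sp xd]])
  have T2: "\<And>v. v \<in> tangent_space M xbar \<Longrightarrow> perm_act (inv \<sigma>) v \<in> tangent_space M xbar"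
    by (rule tangent_invariant[OF ls xM permutes_inv[OF sp] xbar_fixed(2)[OF sp xd]])
  have TS: "subspace (tangent_space M xbar)" by (rule tangent_subspace[OF C2 xM])
  note RT = abstract_result[OF sp TS T1 T2]
  have N1: "\<And>w. w \<in> mfd_normal_space M xbar \<Longrightarrow> perm_act \<sigma> w \<in> mfd_normal_space M xbar"
    using normal_invariant[OF sp T1 T2] by blast
  have N2: "\<And>w. w \<in> mfd_normal_space M xbar \<Longrightarrow> perm_act (inv \<sigma>) w \<in> mfd_normal_space M xbar"
    using normal_invariant[OF sp T1 T2] by blast
  note RN = abstract_result[OF sp normal_subspace N1 N2]
  show ?thesis by (intro conjI RT(1) RT(2) RN(2))
qed

end
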